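(* Let $f \in \mathcal{S}^1_{\mu,L}(\mathbb{R}^d)$ with $0<\mu\le L$, let $x^\star$ be its unique minimizer, let $r\ge 2$, $0<s<1/L$, and $K := \max\left\{0, \frac{3r^2 - 4r - 12}{8}\right\}$. Let $\{x_k\},\{y_k\},\{z_k\}$ be generated by M-NAG from $x_0=y_0\in\mathbb{R}^d$, and for integers $k\ge 0$ define \[ \mathcal{E}(k) := s(k+1)(k+r+1)\big(f(x_{k+1}) - f(x^\star)\big) + \frac12\Big\|k(y_k - x_k) + r(y_k - x^\star) - (k+r)s\nabla f(y_k)\Big\|^2 . \] Then for every integer $k\ge K$, \[ \mathcal{E}(k+1) - \mathcal{E}(k) \le -\mu s\cdot\frac{1 - Ls}{4}\cdot \mathcal{E}(k+1). \]
   Context: $\mathcal{S}^1_{\mu,L}(\mathbb{R}^d)$ denotes the class of continuously differentiable convex functions $f:\mathbb{R}^d\to\mathbb{R}$ whose gradient is $L$-Lipschitz and which are $\mu$-strongly convex, $f(y)\ge f(x)+\langle\nabla f(x),y-x\rangle+\frac{\mu}{2}\|y-x\|^2$ for all $x,y$. M-NAG with step size $s$ and momentum parameter $r$ is the iteration, for $k \ge 0$: $z_k = y_k - s\nabla f(y_k)$; $\; x_{k+1} = z_k$ if $f(z_k)\le f(x_k)$ and $x_{k+1} = x_k$ otherwise; $\; y_{k+1} = x_{k+1} + \frac{k}{k+r+1}(x_{k+1} - x_k) + \frac{k+r}{k+r+1}(z_k - x_{k+1})$. *)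

theory Defs
  imports "HOL-Analysis.Analysis"
begin

definition in_S1 :: "real \<Rightarrow> real \<Rightarrow> ('a::euclidean_space \<Rightarrow> real) \<Rightarrow> ('a \<Rightarrow> 'a) \<Rightarrow> bool" where
  "in_S1 \<mu> L f g \<longleftrightarrow>
     (\<forall>x. (f has_derivative (\<lambda>h. g x \<bullet> h)) (at x)) \<and>
     (\<forall>x y. norm (g x - g y) \<le> L * norm (x - y)) \<and>
     (\<forall>x y. f y \<ge> f x + g x \<bullet> (y - x) + \<mu> / 2 * (norm (y - x))\<^sup>2)"

fun mnag :: "('a::euclidean_space \<Rightarrow> real) \<Rightarrow> ('a \<Rightarrow> 'a) \<Rightarrow> real \<Rightarrow> real \<Rightarrow> 'a \<Rightarrow> nat \<Rightarrow> 'a \<times> 'a" where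
  "mnag f g s r x0 0 = (x0, x0)"
| "mnag f g s r x0 (Suc k) =
     (let (x, y) = mnag f g s r x0 k;
          z = y - s *\<^sub>R g y;
          x' = (if f z \<le> f x then z else x);
          y' = x' + (real k / (real k + r + 1)) *\<^sub>R (x' - x)
                  + ((real k + r) / (real k + r + 1)) *\<^sub>R (z - x')
      in (x', y'))"

definition mnag_x where "mnag_x f g s r x0 k = fst (mnag f g s r x0 k)"
definition mnag_y where "mnag_y f g s r x0 k = snd (mnag f g s r x0 k)"

definition mnag_E :: "('a::euclidean_space \<Rightarrow> real) \<Rightarrow> ('a \<Rightarrow> 'a) \<Rightarrow> real \<Rightarrow> real \<Rightarrow> 'a \<Rightarrow> 'a \<Rightarrow> nat \<Rightarrow> real" where
  "mnag_E f g s r x0 xs k =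
     (let xk = mnag_x f g s r x0 k; yk = mnag_y f g s r x0 k;
          xk1 = mnag_x f g s r x0 (Suc k)
      in s * (real k + 1) * (real k + r + 1) * (f xk1 - f xs)
         + 1/2 * (norm (real k *\<^sub>R (yk - xk) + r *\<^sub>R (yk - xs)
                        - ((real k + r) * s) *\<^sub>R g yk))\<^sup>2)"

end

theory Submission
  imports Defs
begin

lemma mnag_step:
  "mnag_x f g s r x0 (Suc k) =
     (let z = mnag_y f g s r x0 k - s *\<^sub>R g (mnag_y f g s r x0 k)
      in if f z \<le> f (mnag_x f g s r x0 k) then z else mnag_x f g s r x0 k)"
  "mnag_y f g s r x0 (Suc k) =
     (let x = mnag_x f g s r x0 k; z = mnag_y f g s r x0 k - s *\<^sub>R g (mnag_y f g s r x0 k);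
          x' = mnag_x f g s r x0 (Suc k)
      in x' + (real k / (real k + r + 1)) *\<^sub>R (x' - x)
                  + ((real k + r) / (real k + r + 1)) *\<^sub>R (z - x'))"
  by (cases "mnag f g s r x0 k"; simp add: mnag_x_def mnag_y_def Let_def)+

lemma key_identity:
  fixes x y x' xs :: "'a::real_vector" and k :: nat and r s :: real and gy :: 'a
  assumes r: "r \<ge> 0"
  defines "z \<equiv> y - s *\<^sub>R gy"
  defines "y' \<equiv> x' + (real k / (real k + r + 1)) *\<^sub>R (x' - x) + ((real k + r) / (real k + r + 1)) *\<^sub>R (z - x')"
  shows "(real k + 1) *\<^sub>R (y' - x') + r *\<^sub>R (y' - xs) =
         real k *\<^sub>R (y - x) + r *\<^sub>R (y - xs) - ((real k + r) * s) *\<^sub>R gy"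
proof -
  define t where "t = real k + r + 1"
  have t: "t \<noteq> 0" using r unfolding t_def by auto
  have "t *\<^sub>R y' = t *\<^sub>R x' + (t * (real k / t)) *\<^sub>R (x' - x) + (t * ((real k + r)/t)) *\<^sub>R (z - x')"
    unfolding y'_def t_def[symmetric] by (simp add: scaleR_add_right)
  also have "\<dots> = t *\<^sub>R x' + real k *\<^sub>R (x' - x) + (real k + r) *\<^sub>R (z - x')"
    using t by simp
  also have "\<dots> = (real k + 1) *\<^sub>R x' - real k *\<^sub>R x + (real k + r) *\<^sub>R z"
    unfolding t_def by (simp add: algebra_simps)
  finally have ty: "t *\<^sub>R y' = (real k + 1) *\<^sub>R x' - real k *\<^sub>R x + (real k + r) *\<^sub>R z" .
  have "(real k + 1) *\<^sub>R (y' - x') + r *\<^sub>R (y' - xs) = t *\<^sub>R y' - (real k + 1) *\<^sub>R x' - r *\<^sub>R xs"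
    unfolding t_def by (simp add: algebra_simps)
  also have "\<dots> = real k *\<^sub>R (y - x) + r *\<^sub>R (y - xs) - ((real k + r) * s) *\<^sub>R gy"
    unfolding ty z_def by (simp add: algebra_simps)
  finally show ?thesis .
qed

lemma descent:
  assumes "in_S1 \<mu> L f g"
  shows "f (y + h) \<le> f y + g y \<bullet> h + L/2 * (norm h)^2"
proof -
  from assms have hd: "\<And>x. (f has_derivative (\<lambda>h. g x \<bullet> h)) (at x)"
    and lip: "\<And>x y. norm (g x - g y) \<le> L * norm (x - y)" unfolding in_S1_def by auto
  have d1: "((\<lambda>t. f (y + t *\<^sub>R h)) has_real_derivative (g (y + t *\<^sub>R h) \<bullet> h)) (at t)" for t
  proof -
    have a: "((\<lambda>t. y + t *\<^sub>R h) has_derivative (\<lambda>t. t *\<^sub>R h)) (at t)"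
      by (auto intro!: derivative_eq_intros)
    have "((\<lambda>t. f (y + t *\<^sub>R h)) has_derivative (\<lambda>u. g (y + t *\<^sub>R h) \<bullet> (u *\<^sub>R h))) (at t)"
      by (rule has_derivative_compose[OF a hd])
    moreover have "(\<lambda>u. g (y + t *\<^sub>R h) \<bullet> (u *\<^sub>R h)) = (*) (g (y + t *\<^sub>R h) \<bullet> h)"
      by (auto simp: fun_eq_iff)
    ultimately show ?thesis by (simp add: has_field_derivative_def)
  qed
  define \<psi> where "\<psi> t = f (y + t *\<^sub>R h) - f y - t * (g y \<bullet> h) - L/2 * t^2 * (norm h)^2" for t
  have d2: "(\<psi> has_real_derivative (g (y + t *\<^sub>R h) \<bullet> h - g y \<bullet> h - L * t * (norm h)^2)) (at t)" for t
    unfolding \<psi>_def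
    by (rule derivative_eq_intros d1 refl | simp)+
  obtain \<xi> where \<xi>: "0 < \<xi>" "\<xi> < 1" "\<psi> 1 - \<psi> 0 = (1 - 0) * (g (y + \<xi> *\<^sub>R h) \<bullet> h - g y \<bullet> h - L * \<xi> * (norm h)^2)"
    using MVT2[of 0 1 \<psi>, OF _ d2] by auto
  have "g (y + \<xi> *\<^sub>R h) \<bullet> h - g y \<bullet> h = (g (y + \<xi> *\<^sub>R h) - g y) \<bullet> h" by (simp add: inner_diff_left)
  also have "\<dots> \<le> norm (g (y + \<xi> *\<^sub>R h) - g y) * norm h" by (rule norm_cauchy_schwarz)
  also have "\<dots> \<le> L * norm ((y + \<xi> *\<^sub>R h) - y) * norm h" by (rule mult_right_mono[OF lip]) simp
  also have "\<dots> = L * \<xi> * (norm h)^2" using \<xi> by (simp add: power2_eq_square)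
  finally have "\<psi> 1 \<le> \<psi> 0" using \<xi> by simp
  thus ?thesis unfolding \<psi>_def by simp
qed

lemma PL_bound:
  fixes gy d :: "'a::real_inner"
  assumes "\<mu> > 0"
  shows "gy \<bullet> d + \<mu>/2 * (norm d)^2 \<ge> -((norm gy)^2 / (2*\<mu>))"
proof -
  have "0 \<le> (norm (\<mu> *\<^sub>R d + gy))^2" by simp
  also have "\<dots> = \<mu>^2 * (norm d)^2 + 2*\<mu>*(gy \<bullet> d) + (norm gy)^2"
    by (simp only: power2_norm_eq_inner) (simp add: inner_add_left inner_add_right inner_commute power2_eq_square algebra_simps)
  finally have h: "0 \<le> \<mu>^2 * (norm d)^2 + 2*\<mu>*(gy \<bullet> d) + (norm gy)^2" .
  have "-((norm gy)^2 / (2*\<mu>)) \<le> gy \<bullet> d + \<mu>/2 * (norm d)^2 \<longleftrightarrow>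
        -((norm gy)^2) \<le> 2*\<mu>*(gy \<bullet> d) + \<mu>^2 * (norm d)^2"
    using assms by (simp add: field_simps power2_eq_square)
  thus ?thesis using h by linarith
qed

lemma norm3:
  fixes p q t :: "'a::real_normed_vector"
  shows "(norm (p + q + t))^2 \<le> 3 * ((norm p)^2 + (norm q)^2 + (norm t)^2)"
proof -
  have "norm (p + q + t) \<le> norm p + norm q + norm t"
    by (metis add_right_mono norm_triangle_ineq order_trans)
  hence "(norm (p + q + t))^2 \<le> (norm p + norm q + norm t)^2"
    by (rule power_mono) simp
  also have "\<dots> \<le> 3 * ((norm p)^2 + (norm q)^2 + (norm t)^2)"
  proof -
    have "3 * ((norm p)^2 + (norm q)^2 + (norm t)^2) - (norm p + norm q + norm t)^2
          = (norm p - norm q)^2 + (norm q - norm t)^2 + (norm p - norm t)^2"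
      by (simp add: power2_eq_square algebra_simps)
    moreover have "0 \<le> (norm p - norm q)^2 + (norm q - norm t)^2 + (norm p - norm t)^2" by simp
    ultimately show ?thesis by linarith
  qed
  finally show ?thesis .
qed


theorem mainTheorem6:
  fixes f :: "'a::euclidean_space \<Rightarrow> real" and g :: "'a \<Rightarrow> 'a"
    and \<mu> L s r :: real and xs x0 :: 'a and k :: nat
  assumes "in_S1 \<mu> L f g" and "0 < \<mu>" and "\<mu> \<le> L"
    and "\<forall>y. f xs \<le> f y"
    and "r \<ge> 2" and "0 < s" and "s < 1 / L"
    and "real k \<ge> max 0 ((3 * r\<^sup>2 - 4 * r - 12) / 8)"
  shows "mnag_E f g s r x0 xs (Suc k) - mnag_E f g s r x0 xs k
           \<le> - \<mu> * s * ((1 - L * s) / 4) * mnag_E f g s r x0 xs (Suc k)"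
proof -
  from assms(1) have sc: "\<And>x y. f y \<ge> f x + g x \<bullet> (y - x) + \<mu> / 2 * (norm (y - x))\<^sup>2"
    unfolding in_S1_def by auto
  have L0: "L > 0" using assms(2,3) by linarith
  have Ls: "L * s < 1" using assms(7) L0 by (simp add: field_simps)
  have mus: "\<mu> * s \<le> 1"
    using mult_right_mono[OF assms(3), of s] assms(6) Ls by linarith
  have r0: "r \<ge> 0" using assms(5) by linarith
  define n where "n = real k + 1"
  define m where "m = real k + r + 1"
  define x where "x = mnag_x f g s r x0 (Suc k)"
  define y where "y = mnag_y f g s r x0 (Suc k)"
  define x' where "x' = mnag_x f g s r x0 (Suc (Suc k))"
  define gy where "gy = g y"
  define z where "z = y - s *\<^sub>R gy"
  define U where "U = n *\<^sub>R (y - x) + r *\<^sub>R (y - xs)"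
  define A where "A = f x' - f xs"
  define B where "B = f x - f xs"
  define F where "F = f y - f xs"
  define G where "G = (norm gy)^2"
  define P where "P = (norm (y - x))^2"
  define Q where "Q = (norm (y - xs))^2"
  define a where "a = gy \<bullet> (y - x)"
  define b where "b = gy \<bullet> (y - xs)"
  have x'_eq: "x' = (if f z \<le> f x then z else x)"
    unfolding x'_def mnag_step(1)[of f g s r x0 "Suc k"] z_def gy_def x_def y_def by (simp add: Let_def)
  have fx'z: "f x' \<le> f z" and fx'x: "f x' \<le> f x" using x'_eq by auto
  have u_eq: "real k *\<^sub>R (mnag_y f g s r x0 k - mnag_x f g s r x0 k) + r *\<^sub>R (mnag_y f g s r x0 k - xs)
      - ((real k + r) * s) *\<^sub>R g (mnag_y f g s r x0 k) = U"
    unfolding U_def n_def y_def x_def mnag_step(2)[of f g s r x0 k]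
    using key_identity[OF r0, of k "mnag_x f g s r x0 (Suc k)" "mnag_x f g s r x0 k" "mnag_y f g s r x0 k" s
        "g (mnag_y f g s r x0 k)" xs]
    by (simp add: Let_def)
  have E0: "mnag_E f g s r x0 xs k = s * n * m * B + 1/2 * (norm U)^2"
    unfolding mnag_E_def Let_def u_eq B_def n_def m_def x_def by simp
  have E1: "mnag_E f g s r x0 xs (Suc k) = s * (n + 1) * (m + 1) * A + 1/2 * (norm (U - (m * s) *\<^sub>R gy))^2"
    unfolding mnag_E_def Let_def A_def n_def m_def x'_def gy_def U_def x_def y_def
    by (simp add: algebra_simps)
  define c where "c = \<mu> * s * (1 - L * s)"
  define E1v where "E1v = mnag_E f g s r x0 xs (Suc k)"
  define E0v where "E0v = mnag_E f g s r x0 xs k"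
  have npos: "n \<ge> 1" unfolding n_def by simp
  have mge: "m \<ge> n + 2" unfolding m_def n_def using assms(5) by simp
  have mnr: "m = n + r" unfolding m_def n_def by simp
  have cpos: "c \<ge> 0" unfolding c_def using assms(2,6) Ls by simp
  have G0: "G \<ge> 0" and P0: "P \<ge> 0" and Q0: "Q \<ge> 0" unfolding G_def P_def Q_def by simp_all
  have A0: "A \<ge> 0" unfolding A_def using assms(4) by simp
  have Wexp: "(norm (U - (m * s) *\<^sub>R gy))^2 = (norm U)^2 - 2 * (m * s) * (inner gy U) + (m * s)^2 * G"
    unfolding G_def
    by (simp only: power2_norm_eq_inner) (simp add: inner_diff_left inner_diff_right inner_commute power2_eq_square algebra_simps)
  have gU: "gy \<bullet> U = n * a + r * b" unfolding U_def a_def b_def by (simp add: inner_add_right)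
  have diff_eq: "E1v - E0v = s*(n+1)*(m+1)*A - s*n*m*B - m* s*(n*a + r*b) + 1/2*m^2* s^2*G"
    unfolding E1v_def E0v_def E0 E1 Wexp gU by (simp add: algebra_simps power2_eq_square)
  have fa: "B \<ge> F - a + \<mu>/2 * P"
  proof -
    have "f x \<ge> f y + gy \<bullet> (x - y) + \<mu>/2 * (norm (x - y))^2" using sc[of y x] unfolding gy_def .
    moreover have "gy \<bullet> (x - y) = - a" unfolding a_def by (simp add: inner_diff_right)
    moreover have "norm (x - y) = norm (y - x)" by (rule norm_minus_commute)
    ultimately show ?thesis unfolding B_def F_def P_def by simp
  qed
  have fb: "0 \<ge> F - b + \<mu>/2 * Q"
  proof -
    have "f xs \<ge> f y + gy \<bullet> (xs - y) + \<mu>/2 * (norm (xs - y))^2" using sc[of y xs] unfolding gy_def .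
    moreover have "gy \<bullet> (xs - y) = - b" unfolding b_def by (simp add: inner_diff_right)
    moreover have "norm (xs - y) = norm (y - xs)" by (rule norm_minus_commute)
    ultimately show ?thesis unfolding F_def Q_def by simp
  qed
  have FPL: "F \<le> G / (2*\<mu>)"
  proof -
    have "f xs \<ge> f y + gy \<bullet> (xs - y) + \<mu>/2 * (norm (xs - y))^2" using sc[of y xs] unfolding gy_def .
    moreover have "gy \<bullet> (xs - y) + \<mu>/2 * (norm (xs - y))^2 \<ge> -((norm gy)^2 / (2*\<mu>))"
      by (rule PL_bound[OF assms(2)])
    ultimately show ?thesis unfolding F_def G_def by simp
  qed
  have fdesc: "A \<le> F - s * (1 - L* s/2) * G"
  proof -
    have "f z \<le> f y + g y \<bullet> (- s *\<^sub>R gy) + L/2 * (norm (- s *\<^sub>R gy))^2"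
      using descent[OF assms(1), of y "- s *\<^sub>R gy"] unfolding z_def by simp
    also have "\<dots> = f y - s * G + L/2 * s^2 * G"
    proof -
      have "g y \<bullet> (- s *\<^sub>R gy) = - s * G" unfolding G_def gy_def by (simp add: power2_norm_eq_inner)
      moreover have "(norm (- s *\<^sub>R gy))^2 = s^2 * G" unfolding G_def by (simp add: power_mult_distrib)
      ultimately show ?thesis by (simp only:)
    qed
    finally show ?thesis using fx'z unfolding A_def F_def by (simp add: algebra_simps power2_eq_square)
  qed
  have AG: "A \<le> G / (2*\<mu>)"
  proof -
    have "s * (1 - L* s/2) * G \<ge> 0" using assms(6) Ls G0 by simp
    thus ?thesis using fdesc FPL by linarith
  qed
  have i1: "m* s*(n*a + r*b) \<ge> m* s*((m*F - n*B) + \<mu>/2*(n*P + r*Q))"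
  proof -
    have "n*a \<ge> n*(F - B + \<mu>/2 * P)" using mult_left_mono[of "F - B + \<mu>/2 * P" a n] fa npos by simp
    moreover have "r*b \<ge> r*(F + \<mu>/2 * Q)" using mult_left_mono[of "F + \<mu>/2 * Q" b r] fb r0 by simp
    ultimately have "n*a + r*b \<ge> (m*F - n*B) + \<mu>/2*(n*P + r*Q)" unfolding mnr by (simp add: algebra_simps)
    thus ?thesis using mult_left_mono[of _ _ "m* s"] mge npos assms(6) by simp
  qed
  have i2: "s*m^2*F \<ge> s*m^2*(A + s * (1 - L* s/2) * G)"
    using mult_left_mono[of "A + s * (1 - L* s/2) * G" F "s*m^2"] fdesc assms(6) by simp
  define D where "D = m^2 - (n+1)*(m+1)"
  have D0: "D \<ge> 0"
  proof -
    have "D = (r - 2) * real k + (r*r - 3)" unfolding D_def m_def n_def by (simp add: power2_eq_square algebra_simps)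
    moreover have "(r - 2) * real k \<ge> 0" using assms(5) by simp
    moreover have "r*r \<ge> 4" using mult_mono[OF assms(5) assms(5)] r0 by simp
    ultimately show ?thesis by linarith
  qed
  have bound1: "E1v - E0v \<le> - s*D*A - m^2* s^2*(1-L* s)/2*G - m* s*\<mu>/2*(n*P + r*Q)"
  proof -
    have "(- s*D*A - m^2* s^2*(1-L* s)/2*G - m* s*\<mu>/2*(n*P + r*Q)) - (E1v - E0v)
       = (m* s*(n*a + r*b) - m* s*((m*F - n*B) + \<mu>/2*(n*P + r*Q))) + (s*m^2*F - s*m^2*(A + s * (1 - L* s/2) * G))"
      unfolding diff_eq D_def by (simp add: algebra_simps power2_eq_square add_divide_distrib diff_divide_distrib)
    thus ?thesis using i1 i2 by linarith
  qed
  have bE1: "E1v \<le> s*(n+1)*(m+1)*(G/(2*\<mu>)) + 3/2*(n^2*P + r^2*Q + m^2* s^2*G)"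
  proof -
    have "(norm (U - (m * s) *\<^sub>R gy))^2 = (norm (n *\<^sub>R (y - x) + r *\<^sub>R (y - xs) + (-(m* s)) *\<^sub>R gy))^2"
      unfolding U_def by simp
    also have "\<dots> \<le> 3 * ((norm (n *\<^sub>R (y - x)))^2 + (norm (r *\<^sub>R (y - xs)))^2 + (norm ((-(m* s)) *\<^sub>R gy))^2)"
      by (rule norm3)
    also have "\<dots> = 3 * (n^2*P + r^2*Q + m^2* s^2*G)"
      unfolding P_def Q_def G_def by (simp add: power_mult_distrib)
    finally have W: "(norm (U - (m * s) *\<^sub>R gy))^2 \<le> 3 * (n^2*P + r^2*Q + m^2* s^2*G)" .
    have "s*(n+1)*(m+1)*A \<le> s*(n+1)*(m+1)*(G/(2*\<mu>))"
      using mult_left_mono[OF AG, of "s*(n+1)*(m+1)"] assms(6) npos mge by simp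
    thus ?thesis unfolding E1v_def E1 using W by linarith
  qed
  define X where "X = c/4*(s*(n+1)*(m+1)*(G/(2*\<mu>)))"
  define Y where "Y = (1-L* s)* s^2*m^2*G/8"
  have XY: "X \<le> Y"
  proof -
    have "X = (1-L* s)* s^2*((n+1)*(m+1))*G/8" unfolding X_def c_def using assms(2)
      by (simp add: field_simps power2_eq_square)
    also have "\<dots> \<le> (1-L* s)* s^2*(m^2)*G/8"
    proof -
      have "(n+1)*(m+1) \<le> m^2" using D0 unfolding D_def by simp
      hence "(1-L* s)* s^2*((n+1)*(m+1)) \<le> (1-L* s)* s^2*(m^2)"
        by (rule mult_left_mono) (use Ls in simp)
      thus ?thesis using G0 by (simp add: divide_right_mono mult_right_mono)
    qed
    finally show ?thesis unfolding Y_def by simp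
  qed
  have total: "(- s*D*A - m^2* s^2*(1-L* s)/2*G - m* s*\<mu>/2*(n*P + r*Q)) + c/4*(s*(n+1)*(m+1)*(G/(2*\<mu>)) + 3/2*(n^2*P + r^2*Q + m^2* s^2*G))
     = - s*D*A + (X - Y) + m^2* s^2*(1-L* s)*(3/8)*(\<mu>* s - 1)*G + \<mu>* s*n*P*(3*(1-L* s)*n/8 - m/2) + \<mu>* s*r*Q*(3*(1-L* s)*r/8 - m/2)"
    unfolding X_def Y_def c_def by (simp add: algebra_simps power2_eq_square add_divide_distrib diff_divide_distrib)
  have t1: "s*D*A \<ge> 0" using assms(6) D0 A0 by simp
  have t2: "m^2* s^2*(1-L* s)*(3/8)*(\<mu>* s - 1)*G \<le> 0"
  proof -
    have "m^2* s^2*(1-L* s)*(3/8)*G \<ge> 0" using Ls G0 by simp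
    moreover have "\<mu>* s - 1 \<le> 0" using mus by simp
    ultimately have "(m^2* s^2*(1-L* s)*(3/8)*G) * (\<mu>* s - 1) \<le> 0" by (rule mult_nonneg_nonpos)
    thus ?thesis by (simp add: algebra_simps)
  qed
  have t3: "\<mu>* s*n*P*(3*(1-L* s)*n/8 - m/2) \<le> 0"
  proof -
    have "3*(1-L* s)*n/8 \<le> 3*n/8" using assms(6) L0 npos by (simp add: field_simps)
    hence "3*(1-L* s)*n/8 - m/2 \<le> 0" using mge npos by linarith
    moreover have "\<mu>* s*n*P \<ge> 0" using assms(2,6) npos P0 by simp
    ultimately show ?thesis by (simp add: mult_nonneg_nonpos)
  qed
  have t4: "\<mu>* s*r*Q*(3*(1-L* s)*r/8 - m/2) \<le> 0"
  proof -
    have "3*(1-L* s)*r/8 \<le> 3*r/8" using assms(6) L0 r0 by (simp add: field_simps)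
    hence "3*(1-L* s)*r/8 - m/2 \<le> 0" using mnr npos r0 by linarith
    moreover have "\<mu>* s*r*Q \<ge> 0" using assms(2,6) r0 Q0 by simp
    ultimately show ?thesis by (simp add: mult_nonneg_nonpos)
  qed
  have "c/4 * E1v \<le> c/4*(s*(n+1)*(m+1)*(G/(2*\<mu>)) + 3/2*(n^2*P + r^2*Q + m^2* s^2*G))"
    using mult_left_mono[OF bE1, of "c/4"] cpos by simp
  hence "E1v - E0v + c/4 * E1v \<le> 0" using bound1 total t1 t2 t3 t4 XY by linarith
  moreover have "- \<mu> * s * ((1 - L * s) / 4) * E1v = - (c/4 * E1v)" unfolding c_def by simp
  ultimately show ?thesis unfolding E1v_def E0v_def by linarith
qed

end
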